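(* Every $\mathrm{NP}_2$-irreducible digital image is $\mathrm{NP}_2$-rigid.
   Context: A digital image is a finite set $X\subset\mathbb{Z}^n$ with a reflexive symmetric adjacency relation (a finite reflexive graph); continuous maps send adjacent points to adjacent points. On products, $\mathrm{NP}_2$ declares two tuples adjacent iff coordinates are adjacent in at most 2 positions and equal elsewhere. An $\mathrm{NP}_2$-homotopy from $f$ to $g:X\to Y$ is an $\mathrm{NP}_2$-continuous $H:X\times[0,m]_{\mathbb{Z}}\to Y$ (interval with $a\sim b\iff|a-b|\le1$) with $H(\cdot,0)=f$, $H(\cdot,m)=g$; write $f\simeq_2 g$. $X,Y$ are $\mathrm{NP}_2$-homotopy equivalent if there are continuous $f:X\to Y$, $g:Y\to X$ with $g\circ f\simeq_2\mathrm{id}_X$, $f\circ g\simeq_2\mathrm{id}_Y$. $X$ is $\mathrm{NP}_2$-irreducible if it is not $\mathrm{NP}_2$-homotopy equivalent to a digital image with fewer points. $X$ is $\mathrm{NP}_2$-rigid if $\mathrm{id}_X$ is not $\mathrm{NP}_2$-homotopic to any map $X\to X$ other than itself. *)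

theory Defs
  imports Main
begin

text \<open>Points of Z^n are represented as integer lists of length n.
A digital image is a finite set X of such points (all of one length n)
together with a reflexive, symmetric adjacency relation A on X.\<close>

type_synonym point = "int list"

definition digital_image :: "point set \<Rightarrow> (point \<Rightarrow> point \<Rightarrow> bool) \<Rightarrow> bool" where
  "digital_image X A \<longleftrightarrow> finite X \<and> (\<exists>n. \<forall>x\<in>X. length x = n)
     \<and> (\<forall>x\<in>X. A x x) \<and> (\<forall>x\<in>X. \<forall>y\<in>X. A x y \<longrightarrow> A y x)"

definition dcont :: "point set \<Rightarrow> (point \<Rightarrow> point \<Rightarrow> bool) \<Rightarrow> point set \<Rightarrow> (point \<Rightarrow> point \<Rightarrow> bool)
    \<Rightarrow> (point \<Rightarrow> point) \<Rightarrow> bool" where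
  "dcont X A Y B f \<longleftrightarrow> (\<forall>x\<in>X. f x \<in> Y) \<and> (\<forall>x\<in>X. \<forall>x'\<in>X. A x x' \<longrightarrow> B (f x) (f x'))"

definition interval_adj :: "nat \<Rightarrow> nat \<Rightarrow> bool" where
  "interval_adj a b \<longleftrightarrow> (a \<le> b + 1 \<and> b \<le> a + 1)"

text \<open>NP_2 adjacency on the two-factor product X x [0,m]: coordinates adjacent
(adjacency being reflexive, this includes equality) in at most 2 positions
and equal elsewhere.\<close>
definition np2_adj :: "(point \<Rightarrow> point \<Rightarrow> bool) \<Rightarrow> point \<times> nat \<Rightarrow> point \<times> nat \<Rightarrow> bool" where
  "np2_adj A p q \<longleftrightarrow>
     card {i::nat. i < 2 \<and> ((i = 0 \<and> fst p \<noteq> fst q) \<or> (i = 1 \<and> snd p \<noteq> snd q))} \<le> 2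
     \<and> (fst p = fst q \<or> A (fst p) (fst q))
     \<and> (snd p = snd q \<or> interval_adj (snd p) (snd q))"

definition np2_homotopic :: "point set \<Rightarrow> (point \<Rightarrow> point \<Rightarrow> bool) \<Rightarrow> point set \<Rightarrow> (point \<Rightarrow> point \<Rightarrow> bool)
    \<Rightarrow> (point \<Rightarrow> point) \<Rightarrow> (point \<Rightarrow> point) \<Rightarrow> bool" where
  "np2_homotopic X A Y B f g \<longleftrightarrow>
     (\<exists>(m::nat) (H :: point \<Rightarrow> nat \<Rightarrow> point).
        (\<forall>x\<in>X. \<forall>t\<le>m. H x t \<in> Y)
      \<and> (\<forall>x\<in>X. \<forall>s\<le>m. \<forall>x'\<in>X. \<forall>t\<le>m. np2_adj A (x, s) (x', t) \<longrightarrow> B (H x s) (H x' t))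
      \<and> (\<forall>x\<in>X. H x 0 = f x) \<and> (\<forall>x\<in>X. H x m = g x))"

definition np2_homotopy_equivalent :: "point set \<Rightarrow> (point \<Rightarrow> point \<Rightarrow> bool) \<Rightarrow> point set
    \<Rightarrow> (point \<Rightarrow> point \<Rightarrow> bool) \<Rightarrow> bool" where
  "np2_homotopy_equivalent X A Y B \<longleftrightarrow>
     (\<exists>f g. dcont X A Y B f \<and> dcont Y B X A g
        \<and> np2_homotopic X A X A (g \<circ> f) id \<and> np2_homotopic Y B Y B (f \<circ> g) id)"

definition np2_irreducible :: "point set \<Rightarrow> (point \<Rightarrow> point \<Rightarrow> bool) \<Rightarrow> bool" where
  "np2_irreducible X A \<longleftrightarrow>
     \<not> (\<exists>Y B. digital_image Y B \<and> card Y < card X \<and> np2_homotopy_equivalent X A Y B)"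

text \<open>Maps X -> X are compared on X only.\<close>
definition np2_rigid :: "point set \<Rightarrow> (point \<Rightarrow> point \<Rightarrow> bool) \<Rightarrow> bool" where
  "np2_rigid X A \<longleftrightarrow>
     (\<forall>g. (\<forall>x\<in>X. g x \<in> X) \<longrightarrow> np2_homotopic X A X A id g \<longrightarrow> (\<forall>x\<in>X. g x = x))"

end

theory Submission
  imports Defs
begin

lemma np2_adj_iff:
  "np2_adj A p q \<longleftrightarrow> (fst p = fst q \<or> A (fst p) (fst q)) \<and> (snd p = snd q \<or> interval_adj (snd p) (snd q))"
proof -
  have "card {i::nat. i < 2 \<and> ((i = 0 \<and> fst p \<noteq> fst q) \<or> (i = 1 \<and> snd p \<noteq> snd q))} \<le> card {..<(2::nat)}"
    by (rule card_mono) auto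
  then show ?thesis unfolding np2_adj_def by simp
qed

lemma reduce:
  assumes di: "digital_image X A" and xX: "x \<in> X" and yX: "y \<in> X" and ne: "y \<noteq> x"
    and dom: "\<And>z. z \<in> X \<Longrightarrow> A z x \<Longrightarrow> A z y"
  shows "\<not> np2_irreducible X A"
proof -
  have fin: "finite X" and refl: "\<And>z. z \<in> X \<Longrightarrow> A z z"
    and sym: "\<And>z z'. z \<in> X \<Longrightarrow> z' \<in> X \<Longrightarrow> A z z' \<Longrightarrow> A z' z"
    using di unfolding digital_image_def by auto
  have axy: "A x y" using dom[OF xX refl[OF xX]] .
  have ayx: "A y x" using sym[OF xX yX axy] .
  define Y where "Y = X - {x}"
  define r where "r z = (if z = x then y else z)" for z
  have dY: "digital_image Y A" using di unfolding digital_image_def Y_def by auto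
  have cY: "card Y < card X" using fin xX unfolding Y_def by (meson card_Diff1_less)
  have adj1: "A (r z) z'" if "z \<in> X" "z' \<in> X" "z = z' \<or> A z z'" for z z'
  proof (cases "z = x")
    case True
    show ?thesis
    proof (cases "z' = x")
      case True then show ?thesis using \<open>z = x\<close> ayx by (simp add: r_def)
    next
      case False
      then have "A x z'" using that True by auto
      then have "A z' x" using sym xX that by blast
      then have "A z' y" using dom that by blast
      then have "A y z'" using sym yX that by blast
      then show ?thesis using True by (simp add: r_def)
    qed
  next
    case False then show ?thesis using that refl by (auto simp: r_def)
  qed
  have adj2: "A z (r z')" if "z \<in> X" "z' \<in> X" "z = z' \<or> A z z'" for z z'
  proof -
    have "z' = z \<or> A z' z" using that sym by blast
    then have "A (r z') z" using adj1[of z' z] that by blast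
    moreover have "r z' \<in> X" using yX that unfolding r_def by auto
    ultimately show ?thesis using sym that by blast
  qed
  have adj3: "A (r z) (r z')" if "z \<in> X" "z' \<in> X" "z = z' \<or> A z z'" for z z'
  proof -
    have rz: "r z \<in> X" using yX that unfolding r_def by auto
    show ?thesis
    proof (cases "z' = x")
      case True
      then have "A (r z) x" using adj1[OF that] by simp
      then have "A (r z) y" using dom rz by auto
      then show ?thesis using True unfolding r_def by simp
    next
      case False
      then show ?thesis using adj1[OF that] unfolding r_def by simp
    qed
  qed
  have c1: "dcont X A Y A r" unfolding dcont_def Y_def
    using adj3 ne yX unfolding r_def by auto
  have c2: "dcont Y A X A r" unfolding dcont_def Y_def
    using adj3 unfolding r_def by auto
  have h1: "np2_homotopic X A X A (r \<circ> r) id"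
    unfolding np2_homotopic_def
  proof (intro exI[of _ "1::nat"] exI[of _ "\<lambda>z s. if s = 0 then r z else z"] conjI ballI allI impI)
    fix z s z' t assume "z \<in> X" "s \<le> (1::nat)" "z' \<in> X" "t \<le> (1::nat)" "np2_adj A (z, s) (z', t)"
    then show "A (if s = 0 then r z else z) (if t = 0 then r z' else z')"
      using adj1 adj2 adj3 refl unfolding np2_adj_iff by auto
  next
    fix z t assume "z \<in> X" "t \<le> (1::nat)"
    then show "(if t = 0 then r z else z) \<in> X" using yX unfolding r_def by auto
  qed (auto simp: r_def ne)
  have h2: "np2_homotopic Y A Y A (r \<circ> r) id"
    unfolding np2_homotopic_def
  proof (intro exI[of _ "0::nat"] exI[of _ "\<lambda>z s. z"] conjI ballI allI impI)
    fix z s z' t assume "z \<in> Y" "s \<le> (0::nat)" "z' \<in> Y" "t \<le> (0::nat)" "np2_adj A (z, s) (z', t)"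
    then show "A z z'" using refl unfolding np2_adj_iff Y_def by auto
  qed (auto simp: r_def Y_def)
  have "np2_homotopy_equivalent X A Y A"
    unfolding np2_homotopy_equivalent_def using c1 c2 h1 h2 by blast
  then show ?thesis unfolding np2_irreducible_def using dY cY by blast
qed

theorem mainTheorem11:
  assumes "digital_image X A"
      and "np2_irreducible X A"
  shows "np2_rigid X A"
  unfolding np2_rigid_def
proof (intro allI impI ballI)
  fix g x assume gX: "\<forall>x\<in>X. g x \<in> X" and hom: "np2_homotopic X A X A id g" and xX: "x \<in> X"
  obtain m H where HY: "\<forall>x\<in>X. \<forall>t\<le>m. H x t \<in> X"
    and Hc: "\<forall>x\<in>X. \<forall>s\<le>m. \<forall>x'\<in>X. \<forall>t\<le>m. np2_adj A (x, s) (x', t) \<longrightarrow> A (H x s) (H x' t)"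
    and H0: "\<forall>x\<in>X. H x 0 = id x" and Hm: "\<forall>x\<in>X. H x m = g x"
    using hom unfolding np2_homotopic_def by blast
  have refl: "\<And>z. z \<in> X \<Longrightarrow> A z z" using assms(1) unfolding digital_image_def by auto
  have "\<forall>z\<in>X. H z t = z" if "t \<le> m" for t
    using that
  proof (induction t)
    case 0 then show ?case using H0 by simp
  next
    case (Suc t)
    then have IH: "\<forall>z\<in>X. H z t = z" by simp
    show ?case
    proof (rule ccontr)
      assume "\<not> (\<forall>z\<in>X. H z (Suc t) = z)"
      then obtain w where wX: "w \<in> X" and ne: "H w (Suc t) \<noteq> w" by blast
      have yX: "H w (Suc t) \<in> X" using HY wX Suc.prems by blast
      have dom: "A z (H w (Suc t))" if "z \<in> X" "A z w" for z
      proof -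
        have "np2_adj A (z, t) (w, Suc t)" using that unfolding np2_adj_iff interval_adj_def by auto
        then have "A (H z t) (H w (Suc t))" using Hc that wX Suc.prems by (meson Suc_leD)
        then show ?thesis using IH that by simp
      qed
      show False using reduce[OF assms(1) wX yX ne dom] assms(2) by blast
    qed
  qed
  then show "g x = x" using Hm xX by auto
qed

end
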